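(* Let $\overline{G}$ be an acyclic amplified graph with finitely many vertices, and let $S$ be the set of sources of $\overline{G}$. Let $H\subseteq\bigoplus_{v\in\overline{G}^0}\mathbb{Z}$ be the monoid generated by $\{\delta_v: v\in\overline{G}^0\}\cup\{\delta_v-\sum_{e\in T}\delta_{r(e)} : v\in\overline{G}^0_{\mathrm{inf}},\ T\text{ a finite subset of }s^{-1}(v)\}$. If $(n_v)_{v\in\overline{G}^0}\in H$ satisfies $n_v\ge1$ for all $v\in S$, then there exist $(m_v)_{v\in\overline{G}^0}\in H$ with $m_v\ge1$ for all $v\in\overline{G}^0$ and a group isomorphism $\alpha\colon\bigoplus_{v\in\overline{G}^0}\mathbb{Z}\to\bigoplus_{v\in\overline{G}^0}\mathbb{Z}$ such that $\alpha(H)=H$ and $\alpha((n_v)_v)=(m_v)_v$.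
   Context: A graph $E=(E^0,E^1,r,s)$ is amplified if for every edge $e$ the number of edges from $s(e)$ to $r(e)$ is countably infinite; it is acyclic if it has no cycles. A source is a vertex $v$ with $r^{-1}(v)=\emptyset$. $\overline{G}^0_{\mathrm{inf}}$ denotes the set of infinite emitters (vertices $v$ with $s^{-1}(v)$ infinite). $\delta_v$ denotes the standard basis element at $v$. *)

theory Defs
  imports Main "HOL-Library.Countable_Set" "HOL-Library.Function_Algebras"
begin

definition is_graph :: "'v set \<Rightarrow> 'e set \<Rightarrow> ('e \<Rightarrow> 'v) \<Rightarrow> ('e \<Rightarrow> 'v) \<Rightarrow> bool" where
  "is_graph V E s r \<longleftrightarrow> s ` E \<subseteq> V \<and> r ` E \<subseteq> V"

definition amplified :: "'e set \<Rightarrow> ('e \<Rightarrow> 'v) \<Rightarrow> ('e \<Rightarrow> 'v) \<Rightarrow> bool" where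
  "amplified E s r \<longleftrightarrow> (\<forall>e\<in>E. infinite {f\<in>E. s f = s e \<and> r f = r e}
                                 \<and> countable {f\<in>E. s f = s e \<and> r f = r e})"

definition graph_acyclic :: "'e set \<Rightarrow> ('e \<Rightarrow> 'v) \<Rightarrow> ('e \<Rightarrow> 'v) \<Rightarrow> bool" where
  "graph_acyclic E s r \<longleftrightarrow> acyclic {(s e, r e) | e. e \<in> E}"

definition sources :: "'v set \<Rightarrow> 'e set \<Rightarrow> ('e \<Rightarrow> 'v) \<Rightarrow> 'v set" where
  "sources V E r = {v\<in>V. \<not> (\<exists>e\<in>E. r e = v)}"

definition inf_emitters :: "'v set \<Rightarrow> 'e set \<Rightarrow> ('e \<Rightarrow> 'v) \<Rightarrow> 'v set" where
  "inf_emitters V E s = {v\<in>V. infinite {e\<in>E. s e = v}}"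

definition zvec :: "'v set \<Rightarrow> ('v \<Rightarrow> int) set" where
  "zvec V = {x. \<forall>u. u \<notin> V \<longrightarrow> x u = 0}"

definition delta :: "'v \<Rightarrow> 'v \<Rightarrow> int" where
  "delta v = (\<lambda>u. if u = v then 1 else 0)"

definition generators :: "'v set \<Rightarrow> 'e set \<Rightarrow> ('e \<Rightarrow> 'v) \<Rightarrow> ('e \<Rightarrow> 'v) \<Rightarrow> ('v \<Rightarrow> int) set" where
  "generators V E s r =
     {delta v | v. v \<in> V} \<union>
     {(\<lambda>u. delta v u - (\<Sum>e\<in>T. delta (r e) u)) | v T.
        v \<in> inf_emitters V E s \<and> finite T \<and> T \<subseteq> {e\<in>E. s e = v}}"

inductive_set monoid_gen :: "('v \<Rightarrow> int) set \<Rightarrow> ('v \<Rightarrow> int) set" for G where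
  zero: "0 \<in> monoid_gen G"
| add: "x \<in> monoid_gen G \<Longrightarrow> g \<in> G \<Longrightarrow> x + g \<in> monoid_gen G"

definition group_iso_on :: "('v \<Rightarrow> int) set \<Rightarrow> (('v \<Rightarrow> int) \<Rightarrow> ('v \<Rightarrow> int)) \<Rightarrow> bool" where
  "group_iso_on A \<alpha> \<longleftrightarrow> bij_betw \<alpha> A A \<and> (\<forall>x\<in>A. \<forall>y\<in>A. \<alpha> (x + y) = \<alpha> x + \<alpha> y)"

end

theory Submission imports Defs begin

definition shift :: "'v \<Rightarrow> 'v \<Rightarrow> int \<Rightarrow> ('v\<Rightarrow>int) \<Rightarrow> ('v\<Rightarrow>int)" where
  "shift w u c x = (\<lambda>y. x y + (if y = u then c * x w else 0))"

lemma shift_add: "shift w u c (x + y) = shift w u c x + shift w u c y"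
  by (auto simp: shift_def fun_eq_iff algebra_simps)

lemma shift_0: "shift w u c 0 = 0"
  by (auto simp: shift_def fun_eq_iff)

lemma shift_inv: "w \<noteq> u \<Longrightarrow> shift w u (-c) (shift w u c x) = x"
  by (auto simp: shift_def fun_eq_iff)

lemma H_add: "y \<in> monoid_gen G \<Longrightarrow> x \<in> monoid_gen G \<Longrightarrow> x + y \<in> monoid_gen G"
proof (induction y rule: monoid_gen.induct)
  case zero then show ?case by simp
next
  case (add y g) then show ?case by (metis add.assoc monoid_gen.add)
qed

lemma G_H: "g \<in> G \<Longrightarrow> g \<in> monoid_gen G"
  using monoid_gen.add[OF monoid_gen.zero, of g G] by simp

lemma H_nat: "x \<in> monoid_gen G \<Longrightarrow> (\<lambda>y. int k * x y) \<in> monoid_gen G"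
proof (induction k)
  case 0
  have "(\<lambda>y. int 0 * x y) = 0" by (simp add: fun_eq_iff)
  then show ?case by (simp add: monoid_gen.zero)
next
  case (Suc k)
  have "(\<lambda>y. int (Suc k) * x y) = x + (\<lambda>y. int k * x y)" by (simp add: fun_eq_iff algebra_simps)
  then show ?case using Suc H_add by metis
qed

lemma H_int: "x \<in> monoid_gen G \<Longrightarrow> c \<ge> 0 \<Longrightarrow> (\<lambda>y. c * x y) \<in> monoid_gen G"
  using H_nat[of x G "nat c"] by simp

locale ctx =
  fixes V :: "'v set" and E :: "'e set" and s r :: "'e \<Rightarrow> 'v"
  assumes graph: "is_graph V E s r" and fin: "finite V"
    and amp: "amplified E s r" and acyc: "graph_acyclic E s r"
begin

abbreviation "G \<equiv> generators V E s r"
abbreviation "H \<equiv> monoid_gen G"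

lemma sV: "e \<in> E \<Longrightarrow> s e \<in> V" and rV: "e \<in> E \<Longrightarrow> r e \<in> V"
  using graph unfolding is_graph_def by auto

lemma no_loop: "e \<in> E \<Longrightarrow> s e \<noteq> r e"
proof
  assume "e \<in> E" "s e = r e"
  then have "(s e, s e) \<in> {(s e, r e) | e. e \<in> E}\<^sup>+" by (metis (mono_tags, lifting) CollectI r_into_trancl')
  then show False using acyc unfolding graph_acyclic_def acyclic_def by blast
qed

lemma delta_H: "v \<in> V \<Longrightarrow> delta v \<in> H"
  by (rule G_H) (auto simp: generators_def)

lemma gen_ext:
  assumes v: "v \<in> inf_emitters V E s" and T: "finite T" "T \<subseteq> {e\<in>E. s e = v}"
    and e0: "e0 \<in> E" "s e0 = v" and c: "c \<ge> 0"
  shows "(\<lambda>y. delta v y - (\<Sum>e\<in>T. delta (r e) y) - c * delta (r e0) y) \<in> G"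
proof -
  have "infinite {f\<in>E. s f = s e0 \<and> r f = r e0}" using amp e0 unfolding amplified_def by blast
  hence "infinite ({f\<in>E. s f = s e0 \<and> r f = r e0} - T)" using T(1) Diff_infinite_finite by blast
  then obtain T' where T': "finite T'" "card T' = nat c" "T' \<subseteq> {f\<in>E. s f = s e0 \<and> r f = r e0} - T"
    using infinite_arbitrarily_large by blast
  have eq: "(\<Sum>e\<in>T \<union> T'. delta (r e) y) = (\<Sum>e\<in>T. delta (r e) y) + c * delta (r e0) y" for y
  proof -
    have "(\<Sum>e\<in>T \<union> T'. delta (r e) y) = (\<Sum>e\<in>T. delta (r e) y) + (\<Sum>e\<in>T'. delta (r e) y)"
      using T(1) T' by (intro sum.union_disjoint) auto
    moreover have "(\<Sum>e\<in>T'. delta (r e) y) = (\<Sum>e\<in>T'. delta (r e0) y)"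
      using T' by (intro sum.cong) auto
    moreover have "(\<Sum>e\<in>T'. delta (r e0) y) = c * delta (r e0) y" using T' c by simp
    ultimately show ?thesis by simp
  qed
  have "(\<lambda>y. delta v y - (\<Sum>e\<in>T. delta (r e) y) - c * delta (r e0) y)
      = (\<lambda>y. delta v y - (\<Sum>e\<in>T \<union> T'. delta (r e) y))" by (simp add: eq fun_eq_iff)
  moreover have "finite (T \<union> T')" "T \<union> T' \<subseteq> {e\<in>E. s e = v}" using T T' e0 by auto
  ultimately show ?thesis using v unfolding generators_def by blast
qed

lemma F1:
  assumes e0: "e0 \<in> E" and c: "c \<ge> 0"
  shows "(\<lambda>y. delta (s e0) y - c * delta (r e0) y) \<in> H"
proof -
  have "infinite {f\<in>E. s f = s e0 \<and> r f = r e0}" using amp e0 unfolding amplified_def by blast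
  hence "infinite {f\<in>E. s f = s e0}" by (rule infinite_super[rotated]) auto
  hence "s e0 \<in> inf_emitters V E s" using sV[OF e0] unfolding inf_emitters_def by auto
  from gen_ext[OF this _ _ e0 refl c, of "{}"] show ?thesis by (intro G_H) simp
qed


lemma H_add': "x \<in> H \<Longrightarrow> y \<in> H \<Longrightarrow> x + y \<in> H"
  using H_add by blast

lemma shift_G:
  assumes e0: "e0 \<in> E" and g: "g \<in> G"
  shows "shift (s e0) (r e0) c g \<in> H"
proof -
  define w where "w = s e0"
  define u where "u = r e0"
  have uV: "u \<in> V" using rV[OF e0] u_def by simp
  have wu: "w \<noteq> u" using no_loop[OF e0] w_def u_def by simp
  have F1': "(\<lambda>y. delta w y - c' * delta u y) \<in> H" if "c' \<ge> 0" for c'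
    using F1[OF e0 that] w_def u_def by simp
  have du: "(\<lambda>y. c' * delta u y) \<in> H" if "c' \<ge> 0" for c'
    using H_int[OF delta_H[OF uV] that] .
  from g consider (d) v where "v \<in> V" "g = delta v"
    | (t) v T where "v \<in> inf_emitters V E s" "finite T" "T \<subseteq> {e\<in>E. s e = v}"
        "g = (\<lambda>y. delta v y - (\<Sum>e\<in>T. delta (r e) y))"
    unfolding generators_def by blast
  then have "shift w u c g \<in> H"
  proof cases
    case (d v)
    show ?thesis
    proof (cases "v = w")
      case True
      show ?thesis
      proof (cases "c \<ge> 0")
        case True
        have "shift w u c g = delta w + (\<lambda>y. c * delta u y)"
          using d \<open>v = w\<close> by (auto simp: shift_def fun_eq_iff delta_def)
        then show ?thesis using H_add'[OF delta_H[OF d(1)] du[OF True]] \<open>v = w\<close> by simp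
      next
        case False
        have "shift w u c g = (\<lambda>y. delta w y - (-c) * delta u y)"
          using d \<open>v = w\<close> by (auto simp: shift_def fun_eq_iff delta_def)
        then show ?thesis using F1'[of "-c"] False by simp
      qed
    next
      case False
      have "shift w u c g = g" using d False by (auto simp: shift_def fun_eq_iff delta_def)
      then show ?thesis using d delta_H by simp
    qed
  next
    case (t v T)
    have gH: "g \<in> H" using g G_H by blast
    define j where "j = (\<Sum>e\<in>T. delta (r e) w)"
    have j0: "j \<ge> 0" unfolding j_def delta_def by (intro sum_nonneg) auto
    have gw: "g w = delta v w - j" using t j_def by simp
    show ?thesis
    proof (cases "v = w")
      case True
      have "j = 0" unfolding j_def
      proof (intro sum.neutral ballI)
        fix e assume "e \<in> T"
        then have "e \<in> E" "s e = w" using t True by auto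
        then show "delta (r e) w = 0" using no_loop unfolding delta_def by force
      qed
      then have gw1: "g w = 1" using gw True by (simp add: delta_def)
      show ?thesis
      proof (cases "c \<ge> 0")
        case True
        have "shift w u c g = g + (\<lambda>y. c * delta u y)"
          using gw1 by (auto simp: shift_def fun_eq_iff delta_def)
        then show ?thesis using H_add'[OF gH du[OF True]] by simp
      next
        case False
        have "shift w u c g = (\<lambda>y. delta v y - (\<Sum>e\<in>T. delta (r e) y) - (-c) * delta (r e0) y)"
          using gw1 t u_def by (auto simp: shift_def fun_eq_iff delta_def)
        moreover have "(\<lambda>y. delta v y - (\<Sum>e\<in>T. delta (r e) y) - (-c) * delta (r e0) y) \<in> G"
        proof -
          have "s e0 = v" using True w_def by simp
          from gen_ext[OF t(1,2,3) e0 this, of "-c"] False show ?thesis by simp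
        qed
        ultimately show ?thesis by (simp add: G_H)
      qed
    next
      case False
      have gw2: "g w = - j" using gw False by (simp add: delta_def)
      show ?thesis
      proof (cases "c \<le> 0")
        case True
        have "shift w u c g = g + (\<lambda>y. (-c*j) * delta u y)"
          using gw2 by (auto simp: shift_def fun_eq_iff delta_def)
        moreover have "-c*j \<ge> 0" using True j0 by (simp add: mult_nonpos_nonneg)
        ultimately show ?thesis using H_add'[OF gH du[of "-c*j"]] by simp
      next
        case cpos: False
        show ?thesis
        proof (cases "j = 0")
          case True
          have "shift w u c g = g" using gw2 True by (auto simp: shift_def fun_eq_iff)
          then show ?thesis using gH by simp
        next
          case False
          obtain e1 where e1: "e1 \<in> T" "r e1 = w"
          proof -
            have "\<exists>e\<in>T. delta (r e) w \<noteq> 0"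
            proof (rule ccontr)
              assume "\<not> (\<exists>e\<in>T. delta (r e) w \<noteq> 0)"
              then have "j = 0" unfolding j_def by (intro sum.neutral) auto
              with False show False by simp
            qed
            then show ?thesis using that by (auto simp: delta_def split: if_splits)
          qed
          have e1E: "e1 \<in> E" "s e1 = v" using e1 t by auto
          have g1: "(\<lambda>y. delta v y - (\<Sum>e\<in>T. delta (r e) y) - j * delta (r e1) y) \<in> G"
            using gen_ext[OF t(1,2,3) e1E j0] .
          have f: "(\<lambda>y. j * (delta w y - c * delta u y)) \<in> H"
            using H_int[OF F1'[of c] j0] cpos by simp
          have s1: "shift w u c g = (\<lambda>y. g y - c*j*delta u y)"
            by (simp add: shift_def gw2 fun_eq_iff delta_def)
          have "shift w u c g = (\<lambda>y. delta v y - (\<Sum>e\<in>T. delta (r e) y) - j * delta (r e1) y)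
              + (\<lambda>y. j * (delta w y - c * delta u y))"
            unfolding s1 using t(4) e1(2) by (simp add: fun_eq_iff algebra_simps)
          then show ?thesis using H_add'[OF G_H[OF g1] f] by simp
        qed
      qed
    qed
  qed
  then show ?thesis using w_def u_def by simp
qed

lemma shift_H:
  assumes e0: "e0 \<in> E" and x: "x \<in> H"
  shows "shift (s e0) (r e0) c x \<in> H"
  using x
proof (induction x rule: monoid_gen.induct)
  case zero then show ?case using shift_0[of "s e0" "r e0" c] monoid_gen.zero by metis
next
  case (add x g) then show ?case using shift_G[OF e0] shift_add H_add' by metis
qed

definition good where "good \<alpha> \<longleftrightarrow> group_iso_on (zvec V) \<alpha> \<and> \<alpha> ` H = H"

lemma good_id: "good id"
  unfolding good_def group_iso_on_def by auto

lemma good_comp: "good \<alpha> \<Longrightarrow> good \<beta> \<Longrightarrow> good (\<beta> \<circ> \<alpha>)"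
proof -
  assume a: "good \<alpha>" and b: "good \<beta>"
  have ab: "bij_betw \<alpha> (zvec V) (zvec V)" "\<forall>x\<in>zvec V. \<forall>y\<in>zvec V. \<alpha> (x + y) = \<alpha> x + \<alpha> y"
    "\<alpha> ` H = H" using a unfolding good_def group_iso_on_def by auto
  have bb: "bij_betw \<beta> (zvec V) (zvec V)" "\<forall>x\<in>zvec V. \<forall>y\<in>zvec V. \<beta> (x + y) = \<beta> x + \<beta> y"
    "\<beta> ` H = H" using b unfolding good_def group_iso_on_def by auto
  have 1: "bij_betw (\<beta> \<circ> \<alpha>) (zvec V) (zvec V)"
    using bij_betw_trans[OF ab(1) bb(1)] .
  have 2: "\<forall>x\<in>zvec V. \<forall>y\<in>zvec V. (\<beta> \<circ> \<alpha>) (x + y) = (\<beta> \<circ> \<alpha>) x + (\<beta> \<circ> \<alpha>) y"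
  proof (intro ballI)
    fix x y assume xy: "x \<in> zvec V" "y \<in> zvec V"
    have "\<alpha> x \<in> zvec V" "\<alpha> y \<in> zvec V" using bij_betwE[OF ab(1)] xy by auto
    then show "(\<beta> \<circ> \<alpha>) (x + y) = (\<beta> \<circ> \<alpha>) x + (\<beta> \<circ> \<alpha>) y"
      using ab(2) bb(2) xy by simp
  qed
  have "(\<beta> \<circ> \<alpha>) ` H = \<beta> ` (\<alpha> ` H)" by (rule image_comp[symmetric])
  then have 3: "(\<beta> \<circ> \<alpha>) ` H = H" using ab(3) bb(3) by simp
  show ?thesis unfolding good_def group_iso_on_def using 1 2 3 by blast
qed

lemma shift_good:
  assumes e0: "e0 \<in> E"
  shows "good (shift (s e0) (r e0) c)"
proof -
  define w where "w = s e0"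
  define u where "u = r e0"
  have uV: "u \<in> V" using rV[OF e0] u_def by simp
  have wu: "w \<noteq> u" using no_loop[OF e0] w_def u_def by simp
  have z: "shift w u c' x \<in> zvec V" if "x \<in> zvec V" for x c'
    using that uV unfolding zvec_def shift_def by auto
  have "bij_betw (shift w u c) (zvec V) (zvec V)"
  proof (rule bij_betw_byWitness[where f' = "shift w u (-c)"])
    show "\<forall>a\<in>zvec V. shift w u (- c) (shift w u c a) = a" using shift_inv[OF wu] by blast
    show "\<forall>a\<in>zvec V. shift w u c (shift w u (- c) a) = a" using shift_inv[OF wu, of "-c"] by simp
    show "shift w u c ` zvec V \<subseteq> zvec V" using z by blast
    show "shift w u (- c) ` zvec V \<subseteq> zvec V" using z by blast
  qed
  moreover have "shift w u c ` H = H"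
  proof
    show "shift w u c ` H \<subseteq> H" using shift_H[OF e0] w_def u_def by auto
    show "H \<subseteq> shift w u c ` H"
    proof
      fix x assume "x \<in> H"
      then have "shift w u (-c) x \<in> H" using shift_H[OF e0] w_def u_def by auto
      moreover have "x = shift w u c (shift w u (-c) x)" using shift_inv[OF wu, of "-c"] by simp
      ultimately show "x \<in> shift w u c ` H" by blast
    qed
  qed
  moreover have "\<forall>x\<in>zvec V. \<forall>y\<in>zvec V. shift w u c (x + y) = shift w u c x + shift w u c y"
    by (simp add: shift_add)
  ultimately have "good (shift w u c)" unfolding good_def group_iso_on_def by blast
  then show ?thesis using w_def u_def by simp
qed


lemma main:
  shows "x \<in> H \<Longrightarrow> (\<forall>v\<in>sources V E r. x v \<ge> 1) \<Longrightarrow> \<exists>\<alpha>. good \<alpha> \<and> (\<forall>v\<in>V. \<alpha> x v \<ge> 1)"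
proof (induction "card {v\<in>V. x v < 1}" arbitrary: x rule: less_induct)
  case less
  define B where "B = {v\<in>V. x v < 1}"
  have finB: "finite B" using fin B_def by simp
  show ?case
  proof (cases "B = {}")
    case True
    then have "\<forall>v\<in>V. id x v \<ge> 1" unfolding B_def by force
    then show ?thesis using good_id by blast
  next
    case False
    then obtain u0 where "u0 \<in> B" by blast
    define R where "R = {(s e, r e) | e. e \<in> E}"
    have "R \<subseteq> V \<times> V" unfolding R_def using sV rV by blast
    then have "finite R" using fin finite_subset by blast
    moreover have "acyclic R" using acyc unfolding graph_acyclic_def R_def .
    ultimately have "wf R" by (rule finite_acyclic_wf)
    then obtain u where uB: "u \<in> B" and umin: "\<And>y. (y, u) \<in> R \<Longrightarrow> y \<notin> B"
      using wfE_min[OF _ \<open>u0 \<in> B\<close>] by metis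
    have uV: "u \<in> V" and xu: "x u < 1" using uB B_def by auto
    have "u \<notin> sources V E r" using less.prems(2) xu by force
    then obtain e where e: "e \<in> E" "r e = u" using uV unfolding sources_def by blast
    define w where "w = s e"
    have "(w, u) \<in> R" unfolding R_def w_def using e by blast
    then have "w \<notin> B" using umin by blast
    moreover have wV: "w \<in> V" using sV[OF e(1)] w_def by simp
    ultimately have xw: "x w \<ge> 1" unfolding B_def by auto
    have wu: "w \<noteq> u" using no_loop[OF e(1)] e w_def by simp
    define c where "c = 1 - x u"
    have c0: "c \<ge> 0" using xu c_def by simp
    define x' where "x' = shift w u c x"
    have x'H: "x' \<in> H" unfolding x'_def w_def using shift_H[OF e(1) less.prems(1)] e(2) by simp
    have cc: "c * 1 \<le> c * x w" using mult_left_mono[OF xw c0] .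
    have x'u: "x' u \<ge> 1" unfolding x'_def shift_def using cc c_def by simp
    have x'o: "x' v = x v" if "v \<noteq> u" for v unfolding x'_def shift_def using that by simp
    have B': "{v\<in>V. x' v < 1} = B - {u}" unfolding B_def
    proof (rule set_eqI)
      fix v show "v \<in> {v \<in> V. x' v < 1} \<longleftrightarrow> v \<in> {v \<in> V. x v < 1} - {u}"
        by (cases "v = u") (use x'u x'o in auto)
    qed
    have lt: "card {v\<in>V. x' v < 1} < card {v\<in>V. x v < 1}"
      unfolding B' B_def[symmetric] using card_Diff1_less[OF finB uB] by simp
    have src: "\<forall>v\<in>sources V E r. x' v \<ge> 1"
    proof
      fix v assume "v \<in> sources V E r"
      then have "v \<noteq> u" "x v \<ge> 1" using less.prems(2) \<open>u \<notin> sources V E r\<close> by auto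
      then show "x' v \<ge> 1" using x'o by simp
    qed
    obtain \<beta> where b: "good \<beta>" "\<forall>v\<in>V. \<beta> x' v \<ge> 1" using less.hyps[OF lt x'H src] by blast
    have g: "good (shift w u c)" using shift_good[OF e(1)] e(2) w_def by simp
    have "good (\<beta> \<circ> shift w u c)" using good_comp[OF g b(1)] .
    moreover have "\<forall>v\<in>V. (\<beta> \<circ> shift w u c) x v \<ge> 1" using b(2) x'_def by simp
    ultimately show ?thesis by blast
  qed
qed

end

theorem lemma3p9:
  fixes V :: "'v set" and E :: "'e set" and s r :: "'e \<Rightarrow> 'v" and n :: "'v \<Rightarrow> int"
  assumes "is_graph V E s r" and "finite V"
    and "amplified E s r" and "graph_acyclic E s r"
    and "n \<in> monoid_gen (generators V E s r)"
    and "\<forall>v\<in>sources V E r. n v \<ge> 1"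
  shows "\<exists>m \<alpha>. m \<in> monoid_gen (generators V E s r) \<and> (\<forall>v\<in>V. m v \<ge> 1)
           \<and> group_iso_on (zvec V) \<alpha>
           \<and> \<alpha> ` monoid_gen (generators V E s r) = monoid_gen (generators V E s r)
           \<and> \<alpha> n = m"
proof -
  interpret ctx V E s r using assms(1-4) by unfold_locales
  obtain \<alpha> where a: "good \<alpha>" "\<forall>v\<in>V. \<alpha> n v \<ge> 1" using main[OF assms(5,6)] by blast
  have "\<alpha> n \<in> monoid_gen (generators V E s r)" using a(1) assms(5) unfolding good_def by blast
  then show ?thesis using a unfolding good_def by blast
qed

end
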